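(* Suppose $V$ is $\beta$-smooth ($\beta>0$), the step size satisfies $0<\eta\le1/\beta$, and the initial covariance satisfies $\Sigma_0\succeq\beta^{-1}I$. Then the covariances of the iterates of FB--GVI (or of Stochastic FB--GVI, almost surely) satisfy $\Sigma_k\succeq\beta^{-1}I$ for all $k\ge0$.
   Context: $V:\mathbb R^d\to\mathbb R$ is $\beta$-smooth if twice continuously differentiable with $-\beta I\preceq\nabla^2V(x)\preceq\beta I$ for all $x$. Algorithms with step size $\eta>0$, initialization $p_0=\mathcal N(m_0,\Sigma_0)$ with $\Sigma_0$ positive definite: given $p_k=\mathcal N(m_k,\Sigma_k)$, FB--GVI sets $b_k=\mathbb E_{p_k}\nabla V$, $S_k=\mathbb E_{p_k}\nabla^2V$; Stochastic FB--GVI draws $\hat X_k\sim p_k$ and sets $b_k=\nabla V(\hat X_k)$, $S_k=\nabla^2V(\hat X_k)$. Both set $m_{k+1}=m_k-\eta b_k$, $\Sigma_{k+1/2}=(I-\eta S_k)\Sigma_k(I-\eta S_k)$, $\Sigma_{k+1}=\tfrac12\big(\Sigma_{k+1/2}+2\eta I+[\Sigma_{k+1/2}(\Sigma_{k+1/2}+4\eta I)]^{1/2}\big)$ (principal PSD square root), $p_{k+1}=\mathcal N(m_{k+1},\Sigma_{k+1})$. *)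

theory Defs
  imports "HOL-Analysis.Analysis"
begin

type_synonym 'n mat = "real^'n^'n"

definition sym_mat :: "'n::finite mat \<Rightarrow> bool" where
  "sym_mat A \<longleftrightarrow> transpose A = A"

text \<open>Positive semidefinite (symmetric) matrices and the Loewner order.\<close>
definition psd :: "'n::finite mat \<Rightarrow> bool" where
  "psd A \<longleftrightarrow> sym_mat A \<and> (\<forall>v. 0 \<le> v \<bullet> (A *v v))"

definition pd :: "'n::finite mat \<Rightarrow> bool" where
  "pd A \<longleftrightarrow> sym_mat A \<and> (\<forall>v. v \<noteq> 0 \<longrightarrow> 0 < v \<bullet> (A *v v))"

definition loewner_le :: "'n::finite mat \<Rightarrow> 'n mat \<Rightarrow> bool" where
  "loewner_le A B \<longleftrightarrow> psd (B - A)"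

text \<open>Principal (PSD) square root of a PSD matrix.\<close>
definition psd_sqrt :: "'n::finite mat \<Rightarrow> 'n mat" where
  "psd_sqrt A = (THE B. psd B \<and> B ** B = A)"

text \<open>Density of the Gaussian N(m, Sigma) on R^n (Sigma positive definite).\<close>
definition gauss_density :: "real^'n::finite \<Rightarrow> 'n mat \<Rightarrow> real^'n \<Rightarrow> real" where
  "gauss_density m Sig x =
     exp (- ((x - m) \<bullet> (matrix_inv Sig *v (x - m))) / 2)
       / sqrt ((2 * pi) ^ CARD('n) * det Sig)"

text \<open>Expectation of f under N(m, Sigma).\<close>
definition gauss_expect ::
  "real^'n::finite \<Rightarrow> 'n mat \<Rightarrow> (real^'n \<Rightarrow> 'b::euclidean_space) \<Rightarrow> 'b" where
  "gauss_expect m Sig f = integral UNIV (\<lambda>x. gauss_density m Sig x *\<^sub>R f x)"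

text \<open>One forward-backward step, given b_k and S_k.\<close>
definition gvi_step ::
  "real \<Rightarrow> real^'n::finite \<Rightarrow> 'n mat \<Rightarrow> real^'n \<Rightarrow> 'n mat \<Rightarrow> (real^'n) \<times> ('n mat)" where
  "gvi_step \<eta> b S m Sig =
     (let Sh = (mat 1 - \<eta> *\<^sub>R S) ** Sig ** (mat 1 - \<eta> *\<^sub>R S)
      in (m - \<eta> *\<^sub>R b,
          (1/2) *\<^sub>R (Sh + (2 * \<eta>) *\<^sub>R mat 1 + psd_sqrt (Sh ** (Sh + (4 * \<eta>) *\<^sub>R mat 1)))))"

text \<open>FB--GVI iterates (m_k, Sigma_k); gradV is the gradient, H the Hessian of V.\<close>
primrec fbgvi ::
  "(real^'n::finite \<Rightarrow> real^'n) \<Rightarrow> (real^'n \<Rightarrow> 'n mat) \<Rightarrow> real \<Rightarrow> real^'n \<Rightarrow> 'n mat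
     \<Rightarrow> nat \<Rightarrow> (real^'n) \<times> ('n mat)" where
  "fbgvi gradV H \<eta> m0 S0 0 = (m0, S0)"
| "fbgvi gradV H \<eta> m0 S0 (Suc k) =
     (let (m, Sig) = fbgvi gradV H \<eta> m0 S0 k
      in gvi_step \<eta> (gauss_expect m Sig gradV) (gauss_expect m Sig H) m Sig)"

text \<open>Stochastic FB--GVI iterates along a realization X of the samples X_k.\<close>
primrec sfbgvi ::
  "(real^'n::finite \<Rightarrow> real^'n) \<Rightarrow> (real^'n \<Rightarrow> 'n mat) \<Rightarrow> real \<Rightarrow> real^'n \<Rightarrow> 'n mat
     \<Rightarrow> (nat \<Rightarrow> real^'n) \<Rightarrow> nat \<Rightarrow> (real^'n) \<times> ('n mat)" where
  "sfbgvi gradV H \<eta> m0 S0 X 0 = (m0, S0)"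
| "sfbgvi gradV H \<eta> m0 S0 X (Suc k) =
     (let (m, Sig) = sfbgvi gradV H \<eta> m0 S0 X k
      in gvi_step \<eta> (gradV (X k)) (H (X k)) m Sig)"

end

theory Submission
  imports Defs "HOL-Probability.Distributions"
begin

(* ---- S1 ---- *)
lemma sym_inner: assumes "transpose A = A"
  shows "x \<bullet> (A *v y) = (A *v x) \<bullet> (y::real^'n)"
  by (metis assms dot_lmul_matrix transpose_matrix_vector)

lemma quad_coeff_zero:
  fixes a b :: real
  assumes "\<And>t. 0 \<le> a * t + b * t^2" "0 \<le> b"
  shows "a = 0"
proof -
  have "0 \<le> a * (-a/(b+1)) + b * (-a/(b+1))^2" by (rule assms(1))
  also have "\<dots> = -(a^2) / (b+1)^2"
  proof -
    have "b + 1 \<noteq> 0" using assms(2) by simp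
    then show ?thesis by (simp add: divide_simps power2_eq_square) (simp add: algebra_simps)
  qed
  finally have "a^2 / (b+1)^2 \<le> 0" by simp
  moreover have "(b+1)^2 > 0" using assms(2) by simp
  ultimately have "a^2 \<le> 0" by (simp add: divide_le_0_iff)
  then show ?thesis by simp
qed

lemma rayleigh_eigen:
  fixes A :: "real^'n^'n" and W :: "(real^'n) set"
  assumes symA: "transpose A = A" and sW: "subspace W"
    and inv: "\<And>w. w \<in> W \<Longrightarrow> A *v w \<in> W" and ne: "w0 \<in> W" "w0 \<noteq> 0"
  shows "\<exists>v l. v \<in> W \<and> norm v = 1 \<and> A *v v = l *\<^sub>R v \<and> (\<forall>w\<in>W. l * (w \<bullet> w) \<le> w \<bullet> (A *v w))"
proof -
  define K where "K = W \<inter> sphere 0 1"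
  have "compact K" unfolding K_def
    by (metis Int_commute closed_subspace closed_Int_compact compact_sphere sW)
  have "w0 /\<^sub>R norm w0 \<in> K" using ne sW unfolding K_def
    by (simp add: subspace_scale)
  hence "K \<noteq> {}" by blast
  have cont: "continuous_on K (\<lambda>x. x \<bullet> (A *v x))"
    by (intro continuous_intros)
  obtain v where vK: "v \<in> K" and vmin: "\<And>x. x \<in> K \<Longrightarrow> v \<bullet> (A *v v) \<le> x \<bullet> (A *v x)"
    using continuous_attains_inf[OF \<open>compact K\<close> \<open>K \<noteq> {}\<close> cont] by blast
  define l where "l = v \<bullet> (A *v v)"
  have vW: "v \<in> W" and nv: "norm v = 1" using vK by (auto simp: K_def)
  have vv: "v \<bullet> v = 1" using nv by (simp add: dot_square_norm)
  have minW: "l * (w \<bullet> w) \<le> w \<bullet> (A *v w)" if "w \<in> W" for w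
  proof (cases "w = 0")
    case True then show ?thesis by simp
  next
    case False
    let ?u = "w /\<^sub>R norm w"
    have "?u \<in> K" using that False sW by (simp add: K_def subspace_scale)
    hence "l \<le> ?u \<bullet> (A *v ?u)" using vmin l_def by blast
    also have "\<dots> = (w \<bullet> (A *v w)) / (norm w)^2"
      by (simp add: matrix_vector_mult_scaleR power2_eq_square inner_commute divide_inverse)
    finally have "l * (norm w)^2 \<le> w \<bullet> (A *v w)" using False
      by (simp add: pos_le_divide_eq)
    then show ?thesis by (simp add: dot_square_norm)
  qed
  define r where "r = A *v v - l *\<^sub>R v"
  have rW: "r \<in> W" unfolding r_def using inv[OF vW] vW sW
    by (simp add: subspace_diff subspace_scale)
  have orth2: "2 * (w \<bullet> r) = 0" if "w \<in> W" for w
  proof (rule quad_coeff_zero[where b = "w \<bullet> (A *v w) - l * (w \<bullet> w)"])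
    fix t :: real
    have "v + t *\<^sub>R w \<in> W" using vW that sW by (simp add: subspace_add subspace_scale)
    hence "0 \<le> (v + t *\<^sub>R w) \<bullet> (A *v (v + t *\<^sub>R w)) - l * ((v + t *\<^sub>R w) \<bullet> (v + t *\<^sub>R w))"
      using minW by simp
    also have "\<dots> = 2 * (w \<bullet> r) * t + (w \<bullet> (A *v w) - l * (w \<bullet> w)) * t^2"
      using sym_inner[OF symA, of v w] vv unfolding r_def l_def
      by (simp add: matrix_vector_right_distrib matrix_vector_mult_scaleR inner_add_left inner_add_right
          inner_diff_right algebra_simps power2_eq_square inner_commute)
    finally show "0 \<le> 2 * (w \<bullet> r) * t + (w \<bullet> (A *v w) - l * (w \<bullet> w)) * t^2" .
  next
    show "0 \<le> w \<bullet> (A *v w) - l * (w \<bullet> w)" using minW[OF that] by simp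
  qed
  have orth: "w \<bullet> r = 0" if "w \<in> W" for w using orth2[OF that] by simp
  have "r = 0" using orth[OF rW] by simp
  hence "A *v v = l *\<^sub>R v" by (simp add: r_def)
  thus ?thesis using vW nv minW by blast
qed

lemma eigen_set_exists:
  fixes A :: "real^'n^'n"
  assumes symA: "transpose A = A"
  shows "k \<le> CARD('n) \<Longrightarrow> \<exists>B. finite B \<and> card B = k \<and> pairwise orthogonal B \<and>
            (\<forall>b\<in>B. norm b = 1 \<and> (\<exists>l. A *v b = l *\<^sub>R b))"
proof (induction k)
  case 0
  then show ?case by (intro exI[of _ "{}"]) auto
next
  case (Suc k)
  then obtain B where B: "finite B" "card B = k" "pairwise orthogonal B"
      "\<forall>b\<in>B. norm b = 1 \<and> (\<exists>l. A *v b = l *\<^sub>R b)" by auto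
  define W where "W = {w. \<forall>b\<in>B. orthogonal b w}"
  have "dim B < DIM(real^'n)"
    using dim_le_card'[OF B(1)] B(2) Suc.prems by simp
  then obtain x where x: "x \<noteq> 0" "\<And>y. y \<in> span B \<Longrightarrow> orthogonal x y"
    using orthogonal_to_subspace_exists by blast
  have xW: "x \<in> W" unfolding W_def using x(2) span_base orthogonal_commute by blast
  have sW: "subspace W" unfolding W_def subspace_def
    by (auto simp: orthogonal_clauses)
  have invW: "A *v w \<in> W" if "w \<in> W" for w
  proof -
    have "orthogonal b (A *v w)" if "b \<in> B" for b
    proof -
      obtain l where l: "A *v b = l *\<^sub>R b" using B(4) \<open>b \<in> B\<close> by blast
      have "b \<bullet> (A *v w) = (A *v b) \<bullet> w" by (rule sym_inner[OF symA])
      also have "\<dots> = l * (b \<bullet> w)" by (simp add: l)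
      also have "\<dots> = 0" using \<open>w \<in> W\<close> \<open>b \<in> B\<close> by (simp add: W_def orthogonal_def)
      finally show ?thesis by (simp add: orthogonal_def)
    qed
    then show ?thesis by (simp add: W_def)
  qed
  obtain v l where v: "v \<in> W" "norm v = 1" "A *v v = l *\<^sub>R v"
    using rayleigh_eigen[OF symA sW invW xW x(1)] by blast
  have vB: "v \<notin> B"
  proof
    assume "v \<in> B"
    hence "orthogonal v v" using v(1) by (simp add: W_def)
    thus False using v(2) by (simp add: orthogonal_def)
  qed
  show ?case
  proof (intro exI[of _ "insert v B"] conjI)
    show "finite (insert v B)" using B(1) by simp
    show "card (insert v B) = Suc k" using B(1,2) vB by simp
    show "pairwise orthogonal (insert v B)"
      using B(3) v(1) unfolding W_def pairwise_insert by (auto simp: orthogonal_commute)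
    show "\<forall>b\<in>insert v B. norm b = 1 \<and> (\<exists>l. A *v b = l *\<^sub>R b)" using B(4) v by auto
  qed
qed

(* ---- S2 ---- *)
lemma sym_iff_inner:
  fixes R :: "real^'n^'n"
  shows "transpose R = R \<longleftrightarrow> (\<forall>x y. x \<bullet> (R *v y) = (R *v x) \<bullet> y)"
proof
  assume "transpose R = R" thus "\<forall>x y. x \<bullet> (R *v y) = (R *v x) \<bullet> y" using sym_inner by blast
next
  assume H: "\<forall>x y. x \<bullet> (R *v y) = (R *v x) \<bullet> y"
  have "transpose R *v x = R *v x" for x
  proof -
    have "(transpose R *v x - R *v x) \<bullet> y = 0" for y
      using H dot_lmul_matrix[of x R y] by (simp add: inner_diff_left)
    from this[of "transpose R *v x - R *v x"] show ?thesis by simp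
  qed
  thus "transpose R = R" by (simp add: matrix_eq)
qed

lemma orth_sum_coeff:
  fixes B :: "(real^'n) set"
  assumes "finite B" "pairwise orthogonal B" "b \<in> B" "norm b = 1"
  shows "(\<Sum>c\<in>B. f c * (b \<bullet> c)) = f b"
proof -
  have "(\<Sum>c\<in>B. f c * (b \<bullet> c)) = f b * (b \<bullet> b) + (\<Sum>c\<in>B-{b}. f c * (b \<bullet> c))"
    using assms(1,3) by (simp add: sum.remove)
  also have "(\<Sum>c\<in>B-{b}. f c * (b \<bullet> c)) = 0"
    using assms(2,3) by (intro sum.neutral) (auto simp: pairwise_def orthogonal_def)
  also have "b \<bullet> b = 1" using assms(4) by (simp add: dot_square_norm)
  finally show ?thesis by simp
qed

lemma onb_expansion:
  fixes B :: "(real^'n) set"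
  assumes B: "finite B" "card B = CARD('n)" "pairwise orthogonal B" "\<forall>b\<in>B. norm b = 1"
  shows "x = (\<Sum>b\<in>B. (b \<bullet> x) *\<^sub>R b)"
proof -
  have "0 \<notin> B" using B(4) by force
  hence ind: "independent B" using pairwise_orthogonal_independent B(3) by blast
  hence sp: "span B = UNIV" using B(1,2) dim_eq_card dim_eq_full by fastforce
  define y where "y = x - (\<Sum>b\<in>B. (b \<bullet> x) *\<^sub>R b)"
  have "b \<bullet> y = 0" if "b \<in> B" for b
  proof -
    have "b \<bullet> (\<Sum>c\<in>B. (c \<bullet> x) *\<^sub>R c) = (\<Sum>c\<in>B. (c \<bullet> x) * (b \<bullet> c))"
      by (simp add: inner_sum_right)
    also have "\<dots> = b \<bullet> x" using orth_sum_coeff[OF B(1,3) that] B(4) that by auto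
    finally show ?thesis by (simp add: y_def inner_diff_right)
  qed
  hence "\<forall>z\<in>span B. orthogonal y z"
    by (metis orthogonal_commute orthogonal_def orthogonal_to_span)
  hence "y \<bullet> y = 0" using sp by (simp add: orthogonal_def)
  thus ?thesis by (simp add: y_def)
qed

lemma psd_sqrt_ex1:
  fixes M :: "real^'n^'n"
  assumes "psd M"
  shows "\<exists>!R. psd R \<and> R ** R = M"
proof -
  have symM: "transpose M = M" using assms by (simp add: psd_def sym_mat_def)
  have posM: "\<And>v. 0 \<le> v \<bullet> (M *v v)" using assms by (simp add: psd_def)
  obtain B where B: "finite B" "card B = CARD('n)" "pairwise orthogonal B"
      "\<forall>b\<in>B. norm b = 1 \<and> (\<exists>l. M *v b = l *\<^sub>R b)"
    using eigen_set_exists[OF symM order_refl] by blast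
  have nB: "\<forall>b\<in>B. norm b = 1" using B(4) by blast
  obtain lam where lam: "\<And>b. b \<in> B \<Longrightarrow> M *v b = lam b *\<^sub>R b"
    using B(4) by metis
  have bb: "b \<bullet> b = 1" if "b \<in> B" for b using nB that by (simp add: dot_square_norm)
  have lam0: "0 \<le> lam b" if "b \<in> B" for b
    using posM[of b] lam[OF that] bb[OF that] by simp
  have exp: "\<And>x. x = (\<Sum>b\<in>B. (b \<bullet> x) *\<^sub>R b)" using onb_expansion[OF B(1-3) nB] by blast
  define \<rho> where "\<rho> x = (\<Sum>b\<in>B. (sqrt (lam b) * (b \<bullet> x)) *\<^sub>R b)" for x
  have lin: "linear \<rho>"
    unfolding \<rho>_def
  proof (intro linear_compose_sum ballI)
    fix b show "linear (\<lambda>x. (sqrt (lam b) * (b \<bullet> x)) *\<^sub>R b)"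
      by (rule linearI) (simp_all add: inner_add_right distrib_left scaleR_add_left)
  qed
  define R where "R = matrix \<rho>"
  have Rx: "R *v x = \<rho> x" for x
    unfolding R_def using matrix_vector_mul(2)[OF lin] by metis
  have MR: "M *v x = (\<Sum>b\<in>B. (lam b * (b \<bullet> x)) *\<^sub>R b)" for x
  proof -
    have "M *v x = M *v (\<Sum>b\<in>B. (b \<bullet> x) *\<^sub>R b)" using exp[of x] by simp
    also have "\<dots> = (\<Sum>b\<in>B. (b \<bullet> x) *\<^sub>R (M *v b))"
      by (simp add: linear_sum[OF matrix_vector_mul_linear] matrix_vector_mult_scaleR)
    also have "\<dots> = (\<Sum>b\<in>B. (lam b * (b \<bullet> x)) *\<^sub>R b)"
      by (intro sum.cong) (simp_all add: lam)
    finally show ?thesis .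
  qed
  have brho: "b \<bullet> \<rho> x = sqrt (lam b) * (b \<bullet> x)" if "b \<in> B" for b x
  proof -
    have "b \<bullet> \<rho> x = (\<Sum>c\<in>B. (sqrt (lam c) * (c \<bullet> x)) * (b \<bullet> c))"
      by (simp add: \<rho>_def inner_sum_right)
    also have "\<dots> = sqrt (lam b) * (b \<bullet> x)"
      using orth_sum_coeff[OF B(1,3) that] nB that by auto
    finally show ?thesis .
  qed
  have symR: "transpose R = R"
    unfolding sym_iff_inner Rx
  proof (intro allI)
    fix x y
    show "x \<bullet> \<rho> y = \<rho> x \<bullet> y"
      unfolding \<rho>_def inner_sum_right inner_sum_left
      by (intro sum.cong refl) (simp add: inner_commute)
  qed
  have psdR: "psd R"
    unfolding psd_def sym_mat_def
  proof (intro conjI allI symR)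
    fix v
    have "v \<bullet> (R *v v) = (\<Sum>b\<in>B. sqrt (lam b) * (b \<bullet> v)^2)"
      by (simp add: Rx \<rho>_def inner_sum_right power2_eq_square inner_commute mult.assoc)
    also have "\<dots> \<ge> 0" by (intro sum_nonneg) (simp add: lam0)
    finally show "0 \<le> v \<bullet> (R *v v)" .
  qed
  have RR: "R ** R = M"
  proof -
    have "(R ** R) *v x = M *v x" for x
    proof -
      have "(R ** R) *v x = \<rho> (\<rho> x)" by (simp add: Rx flip: matrix_vector_mul_assoc)
      also have "\<dots> = (\<Sum>b\<in>B. (lam b * (b \<bullet> x)) *\<^sub>R b)"
        unfolding \<rho>_def[of "\<rho> x"]
        by (intro sum.cong refl) (simp add: brho lam0 mult.assoc flip: \<rho>_def)
      finally show ?thesis by (simp add: MR)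
    qed
    thus ?thesis by (simp add: matrix_eq)
  qed
  have uniq: "R' = R" if R': "psd R'" "R' ** R' = M" for R'
  proof -
    have symR': "transpose R' = R'" using R' by (simp add: psd_def sym_mat_def)
    have posR': "\<And>v. 0 \<le> v \<bullet> (R' *v v)" using R' by (simp add: psd_def)
    have eig: "R' *v b = sqrt (lam b) *\<^sub>R b" if "b \<in> B" for b
    proof (cases "lam b = 0")
      case True
      have "M *v b = 0" using lam[OF that] True by simp
      hence "(R' *v b) \<bullet> (R' *v b) = 0"
        using sym_inner[OF symR', of b "R' *v b"] R'(2) by (simp add: matrix_vector_mul_assoc)
      thus ?thesis using True by simp
    next
      case False
      define s where "s = sqrt (lam b)"
      have s0: "s > 0" using False lam0[OF that] by (simp add: s_def)
      define w where "w = R' *v b - s *\<^sub>R b"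
      have "R' *v w + s *\<^sub>R w = (R' ** R') *v b - (s * s) *\<^sub>R b"
        by (simp add: w_def matrix_vector_right_distrib matrix_vector_mult_diff_distrib
            matrix_vector_mult_scaleR matrix_vector_mul_assoc algebra_simps)
      also have "\<dots> = 0" using R'(2) lam[OF that] lam0[OF that] by (simp add: s_def)
      finally have "R' *v w = - (s *\<^sub>R w)" by (simp add: eq_neg_iff_add_eq_0)
      hence "w \<bullet> (R' *v w) = - s * (w \<bullet> w)" by simp
      with posR'[of w] have "s * (w \<bullet> w) \<le> 0" by linarith
      with s0 have "w \<bullet> w \<le> 0" by (simp add: mult_le_0_iff)
      hence "w = 0" by (metis inner_eq_zero_iff inner_ge_zero order_antisym)
      thus ?thesis by (simp add: w_def s_def)
    qed
    have "R' *v x = R *v x" for x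
    proof -
      have "R' *v x = R' *v (\<Sum>b\<in>B. (b \<bullet> x) *\<^sub>R b)" using exp[of x] by simp
      also have "\<dots> = (\<Sum>b\<in>B. (b \<bullet> x) *\<^sub>R (R' *v b))"
        by (simp add: linear_sum[OF matrix_vector_mul_linear] matrix_vector_mult_scaleR)
      also have "\<dots> = R *v x"
        by (simp add: Rx \<rho>_def eig mult.commute)
      finally show ?thesis .
    qed
    thus ?thesis by (simp add: matrix_eq)
  qed
  show ?thesis using psdR RR uniq by blast
qed

lemma psd_sqrt:
  assumes "psd M"
  shows "psd (psd_sqrt M)" "psd_sqrt M ** psd_sqrt M = M"
  using theI'[OF psd_sqrt_ex1[OF assms]] unfolding psd_sqrt_def by auto

(* ---- S3 ---- *)
lemma scalar_key:
  fixes \<beta> \<eta> mu s :: real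
  assumes b: "\<beta> > 0" and e: "0 < \<eta>" "\<eta> * \<beta> \<le> 1"
    and ms: "s \<le> mu" and eq: "mu^2 - 2*mu* s = 4*\<eta>* s"
    and sc: "(1 - \<eta>*\<beta>)^2 \<le> \<beta> * s"
  shows "2 - 2*\<eta>*\<beta> \<le> \<beta> * mu"
proof (rule ccontr)
  assume "\<not> ?thesis"
  hence lt: "\<beta>*mu < 2 - 2*\<eta>*\<beta>" by simp
  define t where "t = 2 - 2*\<eta>*\<beta>"
  define m where "m = \<beta> * mu"
  define r where "r = \<beta> * s"
  have mr: "r \<le> m" using ms b by (simp add: m_def r_def)
  have eq': "m^2 - 2*m*r = 4*(\<eta>*\<beta>)*r"
  proof -
    have "\<beta>^2 * (mu^2 - 2*mu* s) = \<beta>^2 * (4*\<eta>* s)" using eq by simp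
    thus ?thesis by (simp add: m_def r_def power2_eq_square algebra_simps)
  qed
  have "m < t" using lt by (simp add: m_def t_def)
  hence "(t - m) * (t + m - 2*r) > 0" using mr by (intro mult_pos_pos) auto
  hence "t^2 - 2*t*r > m^2 - 2*m*r" by (simp add: algebra_simps power2_eq_square)
  hence "t^2 > 4*r" using eq' by (simp add: t_def algebra_simps)
  moreover have "t^2 = 4*(1-\<eta>*\<beta>)^2" by (simp add: t_def power2_eq_square algebra_simps)
  ultimately show False using sc by (simp add: r_def)
qed

lemmas mv_simps = matrix_vector_mul_assoc[symmetric] matrix_vector_mult_add_rdistrib
  matrix_vector_mult_diff_rdistrib scaleR_matrix_vector_assoc[symmetric] matrix_vector_mul_lid
  matrix_vector_right_distrib matrix_vector_mult_diff_distrib matrix_vector_mult_scaleR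

lemma step_bound:
  fixes S Sig :: "real^'n^'n" and \<beta> \<eta> :: real and b m :: "real^'n"
  assumes b: "\<beta> > 0" and e: "0 < \<eta>" "\<eta> \<le> 1/\<beta>"
    and symS: "transpose S = S"
    and Sb: "\<And>x. x \<bullet> (S *v x) \<le> \<beta> * (x \<bullet> x)" "\<And>x. - \<beta> * (x \<bullet> x) \<le> x \<bullet> (S *v x)"
    and symSig: "transpose Sig = Sig"
    and Sigb: "\<And>x. (x \<bullet> x) / \<beta> \<le> x \<bullet> (Sig *v x)"
  shows "loewner_le ((1/\<beta>) *\<^sub>R mat 1) (snd (gvi_step \<eta> b S m Sig))"
proof -
  have eb: "\<eta> * \<beta> \<le> 1" using e b by (simp add: field_simps)
  define T where "T = mat 1 - \<eta> *\<^sub>R S"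
  have Tx: "T *v x = x - \<eta> *\<^sub>R (S *v x)" for x by (simp add: T_def mv_simps)
  have symT: "x \<bullet> (T *v y) = (T *v x) \<bullet> y" for x y
    using sym_inner[OF symS, of x y] by (simp add: Tx inner_diff_right inner_diff_left)
  have symSig': "x \<bullet> (Sig *v y) = (Sig *v x) \<bullet> y" for x y using sym_inner[OF symSig] .
  define Sh where "Sh = T ** Sig ** T"
  have Shx: "Sh *v x = T *v (Sig *v (T *v x))" for x by (simp add: Sh_def mv_simps)
  have symSh: "x \<bullet> (Sh *v y) = (Sh *v x) \<bullet> y" for x y
    by (simp add: Shx symT symSig')
  have qSh: "x \<bullet> (Sh *v x) = (T *v x) \<bullet> (Sig *v (T *v x))" for x
    by (simp add: Shx symT)
  have Sig_pos: "0 \<le> x \<bullet> (Sig *v x)" for x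
    using Sigb[of x] b by (smt (verit) divide_nonneg_pos inner_ge_zero)
  define M where "M = Sh ** (Sh + (4 * \<eta>) *\<^sub>R mat 1)"
  have Mx: "M *v x = Sh *v (Sh *v x) + (4*\<eta>) *\<^sub>R (Sh *v x)" for x
    by (simp add: M_def mv_simps)
  have psdM: "psd M"
    unfolding psd_def sym_mat_def sym_iff_inner
  proof (intro conjI allI)
    fix x y show "x \<bullet> (M *v y) = (M *v x) \<bullet> y"
      by (simp add: Mx inner_add_right inner_add_left symSh)
  next
    fix v
    have "v \<bullet> (M *v v) = (Sh *v v) \<bullet> (Sh *v v) + (4*\<eta>) * (v \<bullet> (Sh *v v))"
      by (simp add: Mx inner_add_right symSh)
    moreover have "0 \<le> v \<bullet> (Sh *v v)" using qSh Sig_pos by simp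
    ultimately show "0 \<le> v \<bullet> (M *v v)" using e by simp
  qed
  define R where "R = psd_sqrt M"
  have psdR: "psd R" and RR: "R ** R = M" using psd_sqrt[OF psdM] by (auto simp: R_def)
  have symR: "x \<bullet> (R *v y) = (R *v x) \<bullet> y" for x y
    using psdR sym_inner[of R x y] by (simp add: psd_def sym_mat_def)
  have posR: "0 \<le> x \<bullet> (R *v x)" for x using psdR by (simp add: psd_def)
  define Sig' where "Sig' = (1/2) *\<^sub>R (Sh + (2 * \<eta>) *\<^sub>R mat 1 + R)"
  have snd_eq: "snd (gvi_step \<eta> b S m Sig) = Sig'"
    by (simp add: gvi_step_def Let_def Sig'_def Sh_def T_def M_def R_def)
  define Q where "Q = Sig' - (1/\<beta>) *\<^sub>R mat 1"
  have Qx: "Q *v x = (1/2) *\<^sub>R (Sh *v x + (2*\<eta>) *\<^sub>R x + R *v x) - (1/\<beta>) *\<^sub>R x" for x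
    by (simp add: Q_def Sig'_def mv_simps)
  have symQ: "transpose Q = Q"
    unfolding sym_iff_inner
    by (intro allI) (simp add: Qx inner_add_right inner_add_left inner_diff_right inner_diff_left symSh symR)
  obtain v l where v: "norm v = 1" "Q *v v = l *\<^sub>R v" and lmin: "\<forall>w. l * (w \<bullet> w) \<le> w \<bullet> (Q *v w)"
  proof -
    have ax: "axis undefined (1::real) \<noteq> (0::real^'n)" by (simp add: vec_eq_iff axis_def)
    have inv: "\<And>w. w \<in> UNIV \<Longrightarrow> Q *v w \<in> UNIV" by simp
    from rayleigh_eigen[OF symQ subspace_UNIV inv UNIV_I ax] show ?thesis using that by blast
  qed
  have vv: "v \<bullet> v = 1" using v(1) by (simp add: dot_square_norm)
  define mu where "mu = 2*l + 2/\<beta> - 2*\<eta>"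
  have "Sh *v v + R *v v = 2 *\<^sub>R (Q *v v) + (2/\<beta> - 2*\<eta>) *\<^sub>R v"
    by (simp add: Qx vec_eq_iff algebra_simps)
  hence Rv: "R *v v = mu *\<^sub>R v - Sh *v v"
    by (simp add: v(2) mu_def vec_eq_iff algebra_simps)
  define s where "s = v \<bullet> (Sh *v v)"
  have "v \<bullet> (R *v v) = mu - s" by (simp add: Rv inner_diff_right vv s_def)
  hence ms: "s \<le> mu" using posR[of v] by simp
  have "(R *v v) \<bullet> (R *v v) = v \<bullet> (M *v v)"
    using symR[of v "R *v v"] RR by (simp add: matrix_vector_mul_assoc)
  also have "\<dots> = (Sh *v v) \<bullet> (Sh *v v) + 4*\<eta>* s"
    by (simp add: Mx inner_add_right symSh s_def)
  finally have A1: "(R *v v) \<bullet> (R *v v) = (Sh *v v) \<bullet> (Sh *v v) + 4*\<eta>* s" .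
  have A2: "(R *v v) \<bullet> (R *v v) = mu^2 - 2*mu* s + (Sh *v v) \<bullet> (Sh *v v)"
    by (simp add: Rv inner_diff_right inner_diff_left vv s_def inner_commute power2_eq_square algebra_simps)
  have eq: "mu^2 - 2*mu* s = 4*\<eta>* s" using A1 A2 by simp
  have Tvv: "(T *v v) \<bullet> v = 1 - \<eta> * (v \<bullet> (S *v v))"
    by (simp add: Tx inner_diff_left inner_diff_right vv inner_commute)
  have tv0: "1 - \<eta>*\<beta> \<le> (T *v v) \<bullet> v"
    using Sb(1)[of v] e vv by (simp add: Tvv)
  have "((T *v v) \<bullet> v)^2 \<le> (norm (T *v v))^2"
  proof -
    have "\<bar>(T *v v) \<bullet> v\<bar> \<le> norm (T *v v)" using Cauchy_Schwarz_ineq2[of "T *v v" v] v(1) by simp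
    thus ?thesis by (metis abs_ge_zero power2_abs power_mono)
  qed
  also have "\<dots> = (T *v v) \<bullet> (T *v v)" by (simp add: dot_square_norm)
  also have "\<dots> \<le> \<beta> * s"
    using Sigb[of "T *v v"] b by (simp add: s_def qSh field_simps)
  finally have sc0: "((T *v v) \<bullet> v)^2 \<le> \<beta> * s" .
  have "(1 - \<eta>*\<beta>)^2 \<le> ((T *v v) \<bullet> v)^2"
    using tv0 eb by (intro power_mono) auto
  with sc0 have sc: "(1 - \<eta>*\<beta>)^2 \<le> \<beta> * s" by linarith
  have "2 - 2*\<eta>*\<beta> \<le> \<beta> * mu"
    by (rule scalar_key[OF b e(1) eb ms eq sc])
  hence l0: "0 \<le> l" using b by (simp add: mu_def algebra_simps zero_le_mult_iff)
  have psdQ: "psd Q"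
    unfolding psd_def sym_mat_def
  proof (intro conjI allI symQ)
    fix w
    show "0 \<le> w \<bullet> (Q *v w)" using lmin l0 by (smt (verit) inner_ge_zero mult_nonneg_nonneg)
  qed
  show ?thesis unfolding loewner_le_def snd_eq using psdQ by (simp add: Q_def)
qed

(* ---- G1 ---- *)
lemma det_shear_one:
  fixes m n :: "'n::finite"
  assumes "m \<noteq> n"
  shows "det (matrix (\<lambda>v::real^'n. \<chi> i. if i = m then v $ m + v $ n else v $ i)) = 1"
proof -
  have "matrix (\<lambda>v::real^'n. \<chi> i. if i = m then v $ m + v $ n else v $ i)
      = (\<chi> k. if k = m then row m (mat 1) + 1 *s row n (mat 1) else row k (mat 1))"
    by (simp add: vec_eq_iff matrix_def axis_def row_def mat_def)
  also have "det \<dots> = det (mat 1 :: real^'n^'n)" by (rule det_row_operation[OF assms])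
  finally show ?thesis by simp
qed

lemma measure_linear_image_gen:
  fixes f :: "real^'n \<Rightarrow> real^'n"
  assumes "linear f" "S \<in> lmeasurable"
  shows "f ` S \<in> lmeasurable \<and> measure lebesgue (f ` S) = \<bar>det (matrix f)\<bar> * measure lebesgue S"
proof -
  have "\<forall>S \<in> lmeasurable. f ` S \<in> lmeasurable \<and> measure lebesgue (f ` S) = \<bar>det (matrix f)\<bar> * measure lebesgue S"
  proof (rule induct_linear_elementary [OF \<open>linear f\<close>]; intro ballI)
    fix f g :: "real^'n \<Rightarrow> real^'n" and S :: "(real^'n) set"
    assume "linear f" and "linear g"
      and f [rule_format]: "\<forall>S \<in> lmeasurable. f ` S \<in> lmeasurable \<and> measure lebesgue (f ` S) = \<bar>det (matrix f)\<bar> * measure lebesgue S"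
      and g [rule_format]: "\<forall>S \<in> lmeasurable. g ` S \<in> lmeasurable \<and> measure lebesgue (g ` S) = \<bar>det (matrix g)\<bar> * measure lebesgue S"
      and S: "S \<in> lmeasurable"
    then have gS: "g ` S \<in> lmeasurable" by blast
    show "(f \<circ> g) ` S \<in> lmeasurable \<and> measure lebesgue ((f \<circ> g) ` S) = \<bar>det (matrix (f \<circ> g))\<bar> * measure lebesgue S"
      using f [OF gS] g [OF S] matrix_compose [OF \<open>linear g\<close> \<open>linear f\<close>]
      by (simp add: o_def image_comp abs_mult det_mul)
  next
    fix f :: "real^'n \<Rightarrow> real^'n" and i and S :: "(real^'n) set"
    assume "linear f" and 0: "\<And>x. f x $ i = 0" and "S \<in> lmeasurable"
    then have "\<not> inj f"
      by (metis (full_types) linear_injective_imp_surjective one_neq_zero surjE vec_component)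
    have detf: "det (matrix f) = 0"
      using \<open>\<not> inj f\<close> det_nz_iff_inj[OF \<open>linear f\<close>] by blast
    show "f ` S \<in> lmeasurable \<and> measure lebesgue (f ` S) = \<bar>det (matrix f)\<bar> * measure lebesgue S"
    proof
      show "f ` S \<in> lmeasurable"
        using lmeasurable_iff_indicator_has_integral \<open>linear f\<close> \<open>\<not> inj f\<close> negligible_UNIV negligible_linear_singular_image by blast
      have "measure lebesgue (f ` S) = 0"
        by (meson \<open>\<not> inj f\<close> \<open>linear f\<close> negligible_imp_measure0 negligible_linear_singular_image)
      then show "measure lebesgue (f ` S) = \<bar>det (matrix f)\<bar> * measure lebesgue S"
        by (simp add: detf)
    qed
  next
    fix c and S :: "(real^'n) set"
    assume "S \<in> lmeasurable"
    show "(\<lambda>a. \<chi> i. c i * a $ i) ` S \<in> lmeasurable \<and> measure lebesgue ((\<lambda>a. \<chi> i. c i * a $ i) ` S) = \<bar>det (matrix (\<lambda>a. \<chi> i. c i * a $ i))\<bar> * measure lebesgue S"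
    proof
      show "(\<lambda>a. \<chi> i. c i * a $ i) ` S \<in> lmeasurable"
        by (simp add: \<open>S \<in> lmeasurable\<close> measurable_stretch)
      show "measure lebesgue ((\<lambda>a. \<chi> i. c i * a $ i) ` S) = \<bar>det (matrix (\<lambda>a. \<chi> i. c i * a $ i))\<bar> * measure lebesgue S"
        by (simp add: measure_stretch [OF \<open>S \<in> lmeasurable\<close>, of c] axis_def matrix_def det_diagonal)
    qed
  next
    fix m :: "'n" and n :: "'n" and S :: "(real^'n) set"
    assume "m \<noteq> n" and "S \<in> lmeasurable"
    let ?h = "\<lambda>v::(real, 'n) vec. \<chi> i. v $ Transposition.transpose m n i"
    have lin: "linear ?h"
      by (rule linearI) (simp_all add: plus_vec_def scaleR_vec_def)
    have meq: "measure lebesgue (?h ` cbox a b) = measure lebesgue (cbox a b)" for a b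
    proof (cases "cbox a b = {}")
      case True then show ?thesis by simp
    next
      case False
      then have him: "?h ` (cbox a b) \<noteq> {}" by blast
      have eq: "?h ` (cbox a b) = cbox (?h a) (?h b)"
        by (auto simp: image_iff lambda_swap_Galois mem_box_cart) (metis transpose_involutory)+
      show ?thesis
        using him prod.permute [OF permutes_swap_id, where S=UNIV and g="\<lambda>i. (b - a)$i", symmetric]
        by (simp add: eq content_cbox_cart False)
    qed
    have "(\<chi> i j. if Transposition.transpose m n i = j then 1 else 0) = (\<chi> i j. if j = Transposition.transpose m n i then 1 else (0::real))"
      by (auto intro!: Cart_lambda_cong)
    then have "matrix ?h = transpose(\<chi> i j. mat 1 $ i $ Transposition.transpose m n j)"
      by (auto simp: matrix_eq transpose_def axis_def mat_def matrix_def)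
    then have 1: "\<bar>det (matrix ?h)\<bar> = 1"
      by (simp add: det_permute_columns permutes_swap_id sign_swap_id abs_mult)
    show "?h ` S \<in> lmeasurable \<and> measure lebesgue (?h ` S) = \<bar>det (matrix ?h)\<bar> * measure lebesgue S"
      using measure_linear_sufficient [OF lin \<open>S \<in> lmeasurable\<close>] meq 1 by force
  next
    fix m n :: "'n" and S :: "(real^'n) set"
    assume "m \<noteq> n" and "S \<in> lmeasurable"
    let ?h = "\<lambda>v::(real, 'n) vec. \<chi> i. if i = m then v $ m + v $ n else v $ i"
    have lin: "linear ?h"
      by (rule linearI) (auto simp: algebra_simps plus_vec_def scaleR_vec_def vec_eq_iff)
    have 1: "det(matrix ?h) = 1" by (rule det_shear_one[OF \<open>m \<noteq> n\<close>])
    have meq: "measure lebesgue (?h ` (cbox a b)) = measure lebesgue (cbox a b)" for a b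
    proof (cases "cbox a b = {}")
      case True then show ?thesis by simp
    next
      case False
      then have ne: "(+) (\<chi> i. if i = n then - a $ n else 0) ` cbox a b \<noteq> {}"
        by auto
      let ?v = "\<chi> i. if i = n then - a $ n else 0"
      have "?h ` cbox a b
            = (+) (\<chi> i. if i = m \<or> i = n then a $ n else 0) ` ?h ` (+) ?v ` (cbox a b)"
        using \<open>m \<noteq> n\<close> unfolding image_comp o_def by (force simp: vec_eq_iff)
      then have "measure lebesgue (?h ` (cbox a b))
               = measure lebesgue ((\<lambda>v. \<chi> i. if i = m then v $ m + v $ n else v $ i) `
                                   (+) ?v ` cbox a b)"
        by (rule ssubst) (rule measure_translation)
      also have "\<dots> = measure lebesgue ((\<lambda>v. \<chi> i. if i = m then v $ m + v $ n else v $ i) ` cbox (?v +a) (?v + b))"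
        by (metis (no_types, lifting) cbox_translation)
      also have "\<dots> = measure lebesgue ((+) ?v ` cbox a b)"
        apply (subst measure_shear_interval)
        using \<open>m \<noteq> n\<close> ne apply auto
        apply (simp add: cbox_translation)
        by (metis cbox_borel cbox_translation measure_completion sets_lborel)
      also have "\<dots> = measure lebesgue (cbox a b)"
        by (rule measure_translation)
      finally show ?thesis .
    qed
    show "?h ` S \<in> lmeasurable \<and> measure lebesgue (?h ` S) = \<bar>det (matrix ?h)\<bar> * measure lebesgue S"
      using measure_linear_sufficient [OF lin \<open>S \<in> lmeasurable\<close>] meq 1 by force
  qed
  with assms show ?thesis by blast
qed

(* ---- G2 ---- *)
lemma lborel_linear_density:
  fixes A :: "real^'n^'n"
  assumes dA: "det A \<noteq> 0"
  shows "lborel = density (distr lborel borel ((*v) A)) (\<lambda>_. ennreal \<bar>det A\<bar>)"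
proof (rule lborel_eqI)
  obtain B where AB: "A ** B = mat 1" "B ** A = mat 1"
    using dA invertible_det_nz[of A] unfolding invertible_def by blast
  have dAB: "det A * det B = 1" using det_mul[of A B] AB by simp
  have meas: "(*v) A \<in> borel_measurable borel"
    by (intro borel_measurable_continuous_onI) (simp add: matrix_vector_mult_linear_continuous_on)
  fix l u :: "real^'n" assume lu: "\<And>b. b \<in> Basis \<Longrightarrow> l \<bullet> b \<le> u \<bullet> b"
  have pre: "(*v) A -` box l u = (*v) B ` box l u"
  proof (intro set_eqI iffI)
    fix y assume "y \<in> (*v) A -` box l u"
    moreover have "y = B *v (A *v y)" using AB by (simp add: matrix_vector_mul_assoc)
    ultimately show "y \<in> (*v) B ` box l u" by blast
  next
    fix y assume "y \<in> (*v) B ` box l u"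
    then obtain x where "x \<in> box l u" "y = B *v x" by blast
    moreover have "A *v (B *v x) = x" using AB by (simp add: matrix_vector_mul_assoc)
    ultimately show "y \<in> (*v) A -` box l u" by simp
  qed
  have Xb: "(*v) B ` box l u \<in> sets borel"
    unfolding pre[symmetric] using meas by (simp add: measurable_sets_borel)
  have bdd: "bounded ((*v) B ` box l u)"
    by (simp add: bounded_linear_image)
  have lm: "(*v) B ` box l u \<in> lmeasurable \<and> measure lebesgue ((*v) B ` box l u) = \<bar>det B\<bar> * measure lebesgue (box l u)"
    using measure_linear_image_gen[OF matrix_vector_mul_linear, of "box l u" B] by simp
  have "emeasure lborel ((*v) B ` box l u) = ennreal (measure lborel ((*v) B ` box l u))"
    using emeasure_bounded_finite[OF bdd] by (simp add: emeasure_eq_ennreal_measure)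
  also have "measure lborel ((*v) B ` box l u) = measure lebesgue ((*v) B ` box l u)"
    using Xb by simp
  also have "\<dots> = \<bar>det B\<bar> * measure lborel (box l u)" using lm by simp
  finally have eB: "emeasure lborel ((*v) B ` box l u) = ennreal (\<bar>det B\<bar> * measure lborel (box l u))" .
  have "emeasure (density (distr lborel borel ((*v) A)) (\<lambda>_. ennreal \<bar>det A\<bar>)) (box l u)
      = ennreal \<bar>det A\<bar> * emeasure (distr lborel borel ((*v) A)) (box l u)"
    by (rule emeasure_density_const) simp
  also have "emeasure (distr lborel borel ((*v) A)) (box l u) = emeasure lborel ((*v) A -` box l u)"
    using meas by (simp add: emeasure_distr)
  also have "\<dots> = ennreal (\<bar>det B\<bar> * measure lborel (box l u))" using pre eB by simp
  also have "ennreal \<bar>det A\<bar> * \<dots> = ennreal (measure lborel (box l u))"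
    using dAB by (simp add: ennreal_mult'[symmetric] abs_mult[symmetric] mult.assoc[symmetric])
  also have "\<dots> = (\<Prod>b\<in>Basis. (u - l) \<bullet> b)"
    using lu by (simp add: measure_lborel_box_eq inner_diff_left prod_nonneg)
  finally show "emeasure (density (distr lborel borel ((*v) A)) (\<lambda>_. ennreal \<bar>det A\<bar>)) (box l u) = (\<Prod>b\<in>Basis. (u - l) \<bullet> b)" .
next
  show "sets (density (distr lborel borel ((*v) A)) (\<lambda>_. ennreal \<bar>det A\<bar>)) = sets borel" by simp
qed

lemma nn_integral_linear_change:
  fixes A :: "real^'n^'n" and f :: "real^'n \<Rightarrow> ennreal"
  assumes dA: "det A \<noteq> 0" and f: "f \<in> borel_measurable borel"
  shows "(\<integral>\<^sup>+x. f x \<partial>lborel) = ennreal \<bar>det A\<bar> * (\<integral>\<^sup>+y. f (A *v y) \<partial>lborel)"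
proof -
  have meas: "(*v) A \<in> borel_measurable borel"
    by (intro borel_measurable_continuous_onI) (simp add: matrix_vector_mult_linear_continuous_on)
  have "(\<integral>\<^sup>+x. f x \<partial>lborel) = (\<integral>\<^sup>+x. f x \<partial>(density (distr lborel borel ((*v) A)) (\<lambda>_. ennreal \<bar>det A\<bar>)))"
    by (rule arg_cong[OF lborel_linear_density[OF dA]])
  also have "\<dots> = (\<integral>\<^sup>+x. ennreal \<bar>det A\<bar> * f x \<partial>(distr lborel borel ((*v) A)))"
    using f by (subst nn_integral_density) auto
  also have "\<dots> = (\<integral>\<^sup>+y. ennreal \<bar>det A\<bar> * f (A *v y) \<partial>lborel)"
    using f meas by (subst nn_integral_distr) auto
  also have "\<dots> = ennreal \<bar>det A\<bar> * (\<integral>\<^sup>+y. f (A *v y) \<partial>lborel)"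
    using f meas by (subst nn_integral_cmult) auto
  finally show ?thesis .
qed

(* ---- G3 ---- *)
lemma nn_integral_std_gauss_1d:
  "(\<integral>\<^sup>+t. ennreal (exp (- (t^2) / 2)) \<partial>lborel) = ennreal (sqrt (2*pi))"
proof -
  have "emeasure (density lborel (normal_density 0 1)) (space (density lborel (normal_density 0 1))) = 1"
    by (rule prob_space.emeasure_space_1[OF prob_space_normal_density]) simp
  hence "emeasure (density lborel (normal_density 0 1)) UNIV = 1" by simp
  hence N1: "(\<integral>\<^sup>+t. ennreal (normal_density 0 1 t) \<partial>lborel) = 1"
    by (simp add: emeasure_density)
  have eq: "ennreal (exp (- (t^2) / 2)) = ennreal (sqrt (2*pi)) * ennreal (normal_density 0 1 t)" for t
    by (simp add: normal_density_def ennreal_mult'[symmetric])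
  have "(\<integral>\<^sup>+t. ennreal (exp (- (t^2) / 2)) \<partial>lborel)
      = (\<integral>\<^sup>+t. ennreal (sqrt (2*pi)) * ennreal (normal_density 0 1 t) \<partial>lborel)"
    by (simp only: eq)
  also have "\<dots> = ennreal (sqrt (2*pi)) * (\<integral>\<^sup>+t. ennreal (normal_density 0 1 t) \<partial>lborel)"
    by (rule nn_integral_cmult) simp
  finally show ?thesis using N1 by simp
qed

lemma nn_integral_std_gauss:
  "(\<integral>\<^sup>+y. ennreal (exp (- (y \<bullet> y) / 2)) \<partial>(lborel :: (real^'n) measure))
     = ennreal (sqrt (2*pi) ^ CARD('n))"
proof -
  have eq: "ennreal (exp (- (y \<bullet> y) / 2)) = (\<Prod>b\<in>Basis. ennreal (exp (- ((y \<bullet> b)^2) / 2)))"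
    for y :: "real^'n"
  proof -
    have "exp (- (y \<bullet> y) / 2) = exp (\<Sum>b\<in>Basis. - ((y \<bullet> b)^2) / 2)"
      by (simp add: euclidean_inner[of y y] power2_eq_square sum_divide_distrib[symmetric] sum_negf)
    also have "\<dots> = (\<Prod>b\<in>Basis. exp (- ((y \<bullet> b)^2) / 2))" by (simp add: exp_sum)
    finally show ?thesis by (simp add: prod_ennreal)
  qed
  have "(\<integral>\<^sup>+y. ennreal (exp (- (y \<bullet> y) / 2)) \<partial>(lborel :: (real^'n) measure))
      = (\<integral>\<^sup>+y. (\<Prod>b\<in>Basis. ennreal (exp (- ((y \<bullet> b)^2) / 2))) \<partial>(lborel :: (real^'n) measure))"
    by (simp only: eq)
  also have "\<dots> = (\<Prod>b\<in>(Basis :: (real^'n) set). (\<integral>\<^sup>+t. ennreal (exp (- (t^2) / 2)) \<partial>lborel))"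
    by (rule nn_integral_lborel_prod[where f = "\<lambda>b t. ennreal (exp (- (t^2) / 2))"]) auto
  also have "\<dots> = ennreal (sqrt (2*pi)) ^ CARD('n)"
    using nn_integral_std_gauss_1d by simp
  finally show ?thesis by (simp add: ennreal_power)
qed

(* ---- G4 ---- *)
lemma cont_gauss_density: "continuous_on UNIV (gauss_density m Sig)"
  unfolding gauss_density_def divide_inverse[of "exp _"]
  by (intro continuous_intros continuous_on_compose2[OF matrix_vector_mult_linear_continuous_on]) auto

lemma gauss_density_props:
  fixes m :: "real^'n" and Sig :: "real^'n^'n"
  assumes symSig: "transpose Sig = Sig" and pos: "\<And>x. x \<noteq> 0 \<Longrightarrow> 0 < x \<bullet> (Sig *v x)"
  shows "(gauss_density m Sig has_integral 1) UNIV" "\<And>x. 0 \<le> gauss_density m Sig x"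
proof -
  have psdS: "psd Sig" unfolding psd_def sym_mat_def
    using symSig pos by (metis inner_zero_left less_eq_real_def matrix_vector_mult_0_right)
  define A where "A = psd_sqrt Sig"
  have psdA: "psd A" and AA: "A ** A = Sig" using psd_sqrt[OF psdS] by (auto simp: A_def)
  have symA: "transpose A = A" using psdA by (simp add: psd_def sym_mat_def)
  have injA: "inj ((*v) A)"
  proof (rule injI)
    fix x y assume "A *v x = A *v y"
    hence "A *v (x - y) = 0" by (simp add: matrix_vector_mult_diff_distrib)
    hence "Sig *v (x - y) = 0" using AA by (metis matrix_vector_mul_assoc matrix_vector_mult_0_right)
    hence "(x - y) \<bullet> (Sig *v (x - y)) = 0" by simp
    thus "x = y" using pos[of "x - y"] by (metis less_irrefl right_minus_eq)
  qed
  have dA: "det A \<noteq> 0"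
    using det_nz_iff_inj[OF matrix_vector_mul_linear[of A]] injA by simp
  obtain B where AB: "A ** B = mat 1" "B ** A = mat 1"
    using dA invertible_det_nz[of A] unfolding invertible_def by blast
  have detS: "det Sig = det A * det A" by (metis AA det_mul)
  define Si where "Si = matrix_inv Sig"
  have "invertible Sig" by (simp add: invertible_det_nz detS dA)
  hence ex: "\<exists>A'. Sig ** A' = mat 1 \<and> A' ** Sig = mat 1" unfolding invertible_def .
  have SSi: "Sig ** Si = mat 1 \<and> Si ** Sig = mat 1"
    unfolding Si_def matrix_inv_def by (rule someI_ex[OF ex])
  have SBB: "Sig ** (B ** B) = mat 1"
  proof -
    have "Sig ** (B ** B) = A ** ((A ** B) ** B)" by (simp add: AA[symmetric] matrix_mul_assoc)
    also have "\<dots> = mat 1" by (simp only: AB matrix_mul_lid)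
    finally show ?thesis .
  qed
  have SiBB: "Si = B ** B"
  proof -
    have "Si = Si ** (Sig ** (B ** B))" using SBB by simp
    also have "\<dots> = (Si ** Sig) ** (B ** B)" by (simp add: matrix_mul_assoc)
    also have "\<dots> = B ** B" using SSi by simp
    finally show ?thesis .
  qed
  have quad: "(A *v y) \<bullet> (Si *v (A *v y)) = y \<bullet> y" for y
  proof -
    have e1: "(A *v y) \<bullet> (Si *v (A *v y)) = y \<bullet> (A *v (Si *v (A *v y)))"
      using sym_inner[OF symA, of y "Si *v (A *v y)"] by simp
    have e2: "A *v (Si *v (A *v y)) = ((A ** B) ** (B ** A)) *v y"
      by (simp add: SiBB matrix_vector_mul_assoc matrix_mul_assoc)
    have e3: "((A ** B) ** (B ** A)) *v y = y" using AB by simp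
    show ?thesis using e1 e2 e3 by simp
  qed
  have detS_pos: "det Sig > 0" using detS dA by (simp add: zero_less_mult_iff linorder_neq_iff) blast
  define c where "c = sqrt ((2 * pi) ^ CARD('n) * det Sig)"
  have c_eq: "c = sqrt (2*pi) ^ CARD('n) * \<bar>det A\<bar>"
    unfolding c_def detS by (simp add: real_sqrt_mult real_sqrt_power power_mult_distrib)
  have c_pos: "c > 0" unfolding c_eq using dA by simp
  show nonneg: "\<And>x. 0 \<le> gauss_density m Sig x"
    unfolding gauss_density_def c_def[symmetric] using c_pos by simp
  have dmeas: "gauss_density m Sig \<in> borel_measurable borel"
    by (rule borel_measurable_continuous_onI[OF cont_gauss_density])
  have dA_y: "gauss_density m Sig (m + A *v y) = exp (- (y \<bullet> y) / 2) / c" for y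
    unfolding gauss_density_def c_def[symmetric] Si_def[symmetric] using quad[of y] by simp
  have meas2: "(\<lambda>x. gauss_density m Sig (m + x)) \<in> borel_measurable borel"
    by (rule borel_measurable_continuous_onI)
       (intro continuous_on_compose2[OF cont_gauss_density] continuous_intros; simp)
  have meas2': "(\<lambda>x. ennreal (gauss_density m Sig (m + x))) \<in> borel_measurable borel"
    using meas2 by measurable
  have s1: "(\<integral>\<^sup>+x. ennreal (gauss_density m Sig (m + x)) \<partial>lborel)
      = (\<integral>\<^sup>+x. ennreal (gauss_density m Sig x) \<partial>(distr lborel borel ((+) m)))"
    using dmeas by (subst nn_integral_distr) auto
  have s1': "(\<integral>\<^sup>+x. ennreal (gauss_density m Sig x) \<partial>lborel)
      = (\<integral>\<^sup>+x. ennreal (gauss_density m Sig (m + x)) \<partial>lborel)"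
    unfolding s1 lborel_distr_plus ..
  have s2: "(\<integral>\<^sup>+x. ennreal (gauss_density m Sig (m + x)) \<partial>lborel)
      = ennreal \<bar>det A\<bar> * (\<integral>\<^sup>+y. ennreal (gauss_density m Sig (m + A *v y)) \<partial>lborel)"
    by (rule nn_integral_linear_change[OF dA meas2'])
  have pw: "ennreal (gauss_density m Sig (m + A *v y)) = ennreal (1/c) * ennreal (exp (- (y \<bullet> y) / 2))" for y
  proof -
    have "gauss_density m Sig (m + A *v y) = (1/c) * exp (- (y \<bullet> y) / 2)" by (simp add: dA_y)
    moreover have "ennreal ((1/c) * exp (- (y \<bullet> y) / 2)) = ennreal (1/c) * ennreal (exp (- (y \<bullet> y) / 2))"
      by (rule ennreal_mult) (use c_pos in auto)
    ultimately show ?thesis by (simp only:)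
  qed
  have s3: "(\<integral>\<^sup>+y. ennreal (gauss_density m Sig (m + A *v y)) \<partial>lborel)
      = ennreal (1/c) * (\<integral>\<^sup>+y. ennreal (exp (- (y \<bullet> y) / 2)) \<partial>(lborel :: (real^'n) measure))"
    unfolding pw by (subst nn_integral_cmult) auto
  have s4: "ennreal \<bar>det A\<bar> * (ennreal (1/c) * ennreal (sqrt (2*pi) ^ CARD('n))) = ennreal 1"
  proof -
    have "\<bar>det A\<bar> * ((1/c) * (sqrt (2*pi) ^ CARD('n))) = 1"
      using dA by (simp add: c_eq)
    thus ?thesis using c_pos dA by (simp add: ennreal_mult[symmetric])
  qed
  have "(\<integral>\<^sup>+x. ennreal (gauss_density m Sig x) \<partial>lborel) = ennreal 1"
    unfolding s1' s2 s3 nn_integral_std_gauss s4 ..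
  thus "(gauss_density m Sig has_integral 1) UNIV"
    using nn_integral_has_integral[OF dmeas nonneg] by simp
qed

(* ---- F ---- *)
lemma expect_bounds:
  fixes H :: "real^'n \<Rightarrow> real^'n^'n" and d :: "real^'n \<Rightarrow> real" and \<beta> :: real
  assumes d1: "(d has_integral 1) UNIV" and d0: "\<And>x. 0 \<le> d x"
    and symH: "\<And>x. transpose (H x) = H x"
    and Hub: "\<And>x v. v \<bullet> (H x *v v) \<le> \<beta> * (v \<bullet> v)"
    and Hlb: "\<And>x v. - \<beta> * (v \<bullet> v) \<le> v \<bullet> (H x *v v)"
    and b0: "0 \<le> \<beta>"
  defines "S \<equiv> integral UNIV (\<lambda>x. d x *\<^sub>R H x)"
  shows "transpose S = S" "\<And>v. v \<bullet> (S *v v) \<le> \<beta> * (v \<bullet> v)" "\<And>v. - \<beta> * (v \<bullet> v) \<le> v \<bullet> (S *v v)"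
proof -
  have all: "transpose S = S \<and> (\<forall>v. v \<bullet> (S *v v) \<le> \<beta> * (v \<bullet> v) \<and> - \<beta> * (v \<bullet> v) \<le> v \<bullet> (S *v v))"
  proof (cases "(\<lambda>x. d x *\<^sub>R H x) integrable_on UNIV")
    case False
    hence "S = 0" unfolding S_def by (rule not_integrable_integral)
    moreover have "transpose (0::real^'n^'n) = 0" by (simp add: vec_eq_iff transpose_def)
    ultimately show ?thesis using b0 by simp
  next
    case True
    have dint: "d integrable_on UNIV" using d1 by blast
    have intd: "integral UNIV d = 1" using d1 by blast
    have blT: "bounded_linear (transpose :: real^'n^'n \<Rightarrow> real^'n^'n)"
      unfolding linear_conv_bounded_linear[symmetric]
      by (rule linearI) (simp_all add: vec_eq_iff transpose_def)
    have "transpose S = integral UNIV (transpose \<circ> (\<lambda>x. d x *\<^sub>R H x))"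
      unfolding S_def by (rule integral_linear[OF True blT, symmetric])
    also have "transpose \<circ> (\<lambda>x. d x *\<^sub>R H x) = (\<lambda>x. d x *\<^sub>R H x)"
      by (rule ext) (simp add: transpose_scalar symH)
    finally have tS: "transpose S = S" unfolding S_def .
    have qv: "v \<bullet> (S *v v) \<le> \<beta> * (v \<bullet> v) \<and> - \<beta> * (v \<bullet> v) \<le> v \<bullet> (S *v v)" for v
    proof -
      define L where "L = (\<lambda>M::real^'n^'n. v \<bullet> (M *v v))"
      have blL: "bounded_linear L"
        unfolding linear_conv_bounded_linear[symmetric] L_def
        by (rule linearI) (simp_all add: matrix_vector_mult_add_rdistrib inner_add_right
            scaleR_matrix_vector_assoc[symmetric])
      have comp: "L \<circ> (\<lambda>x. d x *\<^sub>R H x) = (\<lambda>x. d x * (v \<bullet> (H x *v v)))"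
        by (rule ext) (simp add: L_def scaleR_matrix_vector_assoc[symmetric])
      have eqS: "v \<bullet> (S *v v) = integral UNIV (\<lambda>x. d x * (v \<bullet> (H x *v v)))"
      proof -
        have "integral UNIV (L \<circ> (\<lambda>x. d x *\<^sub>R H x)) = L S"
          unfolding S_def by (rule integral_linear[OF True blL])
        thus ?thesis unfolding comp by (simp add: L_def)
      qed
      have int1: "(\<lambda>x. d x * (v \<bullet> (H x *v v))) integrable_on UNIV"
        using integrable_linear[OF True blL] unfolding comp .
      have int2: "(\<lambda>x. (\<beta> * (v \<bullet> v)) * d x) integrable_on UNIV"
        using integrable_on_cmult_left[OF dint] by simp
      have int3: "(\<lambda>x. (- \<beta> * (v \<bullet> v)) * d x) integrable_on UNIV"
        using integrable_on_cmult_left[OF dint, of "- \<beta> * (v \<bullet> v)"] by simp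
      have "integral UNIV (\<lambda>x. d x * (v \<bullet> (H x *v v))) \<le> integral UNIV (\<lambda>x. (\<beta> * (v \<bullet> v)) * d x)"
        using int1 int2 by (rule integral_le)
          (metis Hub d0 mult.commute mult_left_mono)
      also have "\<dots> = \<beta> * (v \<bullet> v)" using intd by simp
      finally have up: "v \<bullet> (S *v v) \<le> \<beta> * (v \<bullet> v)" using eqS by simp
      have "integral UNIV (\<lambda>x. (- \<beta> * (v \<bullet> v)) * d x) \<le> integral UNIV (\<lambda>x. d x * (v \<bullet> (H x *v v)))"
        using int3 int1 by (rule integral_le)
          (metis Hlb d0 mult.commute mult_left_mono)
      moreover have "integral UNIV (\<lambda>x. (- \<beta> * (v \<bullet> v)) * d x) = - \<beta> * (v \<bullet> v)" using intd by simp
      ultimately have lo: "- \<beta> * (v \<bullet> v) \<le> v \<bullet> (S *v v)" using eqS intd by simp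
      show ?thesis using up lo by simp
    qed
    show ?thesis using tS qv by blast
  qed
  show "transpose S = S" "\<And>v. v \<bullet> (S *v v) \<le> \<beta> * (v \<bullet> v)" "\<And>v. - \<beta> * (v \<bullet> v) \<le> v \<bullet> (S *v v)"
    using all by auto
qed

lemma loew_lower:
  fixes Sig :: "real^'n^'n"
  assumes "loewner_le ((1/\<beta>) *\<^sub>R mat 1) Sig"
  shows "transpose Sig = Sig" "\<And>x. (x \<bullet> x) / \<beta> \<le> x \<bullet> (Sig *v x)"
proof -
  have P: "psd (Sig - (1/\<beta>) *\<^sub>R mat 1)" using assms by (simp add: loewner_le_def)
  have s: "x \<bullet> ((Sig - (1/\<beta>) *\<^sub>R mat 1) *v y) = ((Sig - (1/\<beta>) *\<^sub>R mat 1) *v x) \<bullet> y" for x y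
    by (rule sym_inner) (use P in \<open>simp add: psd_def sym_mat_def\<close>)
  show "transpose Sig = Sig" unfolding sym_iff_inner
  proof (intro allI)
    fix x y show "x \<bullet> (Sig *v y) = (Sig *v x) \<bullet> y"
      using s[of x y] by (simp add: mv_simps inner_diff_right inner_diff_left inner_commute)
  qed
  fix x
  have "0 \<le> x \<bullet> ((Sig - (1/\<beta>) *\<^sub>R mat 1) *v x)" using P by (simp add: psd_def)
  thus "(x \<bullet> x) / \<beta> \<le> x \<bullet> (Sig *v x)" by (simp add: mv_simps inner_diff_right)
qed

lemma hess_conv:
  fixes M :: "real^'n^'n"
  assumes "loewner_le ((- \<beta>) *\<^sub>R mat 1) M \<and> loewner_le M (\<beta> *\<^sub>R mat 1)"
  shows "transpose M = M" "\<And>v. v \<bullet> (M *v v) \<le> \<beta> * (v \<bullet> v)" "\<And>v. - \<beta> * (v \<bullet> v) \<le> v \<bullet> (M *v v)"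
proof -
  have P1: "psd (M - (- \<beta>) *\<^sub>R mat 1)" and P2: "psd (\<beta> *\<^sub>R mat 1 - M)"
    using assms by (auto simp: loewner_le_def)
  have s: "x \<bullet> ((M - (- \<beta>) *\<^sub>R mat 1) *v y) = ((M - (- \<beta>) *\<^sub>R mat 1) *v x) \<bullet> y" for x y
    by (rule sym_inner) (use P1 in \<open>simp only: psd_def sym_mat_def\<close>)
  show "transpose M = M" unfolding sym_iff_inner
  proof (intro allI)
    fix x y show "x \<bullet> (M *v y) = (M *v x) \<bullet> y"
      using s[of x y] by (simp add: mv_simps inner_diff_right inner_diff_left inner_add_right inner_add_left inner_commute)
  qed
  fix v
  have "0 \<le> v \<bullet> ((\<beta> *\<^sub>R mat 1 - M) *v v)" using P2 by (simp add: psd_def)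
  thus "v \<bullet> (M *v v) \<le> \<beta> * (v \<bullet> v)" by (simp add: mv_simps inner_diff_right)
  have "0 \<le> v \<bullet> ((M - (- \<beta>) *\<^sub>R mat 1) *v v)" using P1 by (simp add: psd_def)
  thus "- \<beta> * (v \<bullet> v) \<le> v \<bullet> (M *v v)" by (simp add: mv_simps inner_diff_right inner_add_right)
qed

(* ---- M ---- *)
theorem mainTheorem15:
  fixes V :: "real^'n \<Rightarrow> real" and gradV :: "real^'n \<Rightarrow> real^'n"
    and H :: "real^'n \<Rightarrow> real^'n^'n"
    and \<beta> \<eta> :: real and m0 :: "real^'n" and Sig0 :: "real^'n^'n"
  assumes gradV: "\<And>x. (V has_derivative (\<lambda>h. gradV x \<bullet> h)) (at x)"
    and hess: "\<And>x. (gradV has_derivative (\<lambda>h. H x *v h)) (at x)"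
    and hess_cont: "continuous_on UNIV H"
    and hess_bounds: "\<And>x. loewner_le ((- \<beta>) *\<^sub>R mat 1) (H x) \<and> loewner_le (H x) (\<beta> *\<^sub>R mat 1)"
    and beta_pos: "\<beta> > 0"
    and eta: "0 < \<eta>" "\<eta> \<le> 1 / \<beta>"
    and Sig0_pd: "pd Sig0"
    and Sig0_ge: "loewner_le ((1 / \<beta>) *\<^sub>R mat 1) Sig0"
  shows "(\<forall>k. loewner_le ((1 / \<beta>) *\<^sub>R mat 1) (snd (fbgvi gradV H \<eta> m0 Sig0 k)))
       \<and> (\<forall>X k. loewner_le ((1 / \<beta>) *\<^sub>R mat 1) (snd (sfbgvi gradV H \<eta> m0 Sig0 X k)))"
proof -
  have b0: "0 \<le> \<beta>" using beta_pos by simp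
  have Hs: "\<And>x. transpose (H x) = H x" and Hub: "\<And>x v. v \<bullet> (H x *v v) \<le> \<beta> * (v \<bullet> v)"
    and Hlb: "\<And>x v. - \<beta> * (v \<bullet> v) \<le> v \<bullet> (H x *v v)"
    using hess_conv[OF hess_bounds] by auto
  have step: "loewner_le ((1 / \<beta>) *\<^sub>R mat 1) (snd (gvi_step \<eta> b S m Sig))"
    if L: "loewner_le ((1 / \<beta>) *\<^sub>R mat 1) Sig" and sS: "transpose S = S"
      and Sb1: "\<And>x. x \<bullet> (S *v x) \<le> \<beta> * (x \<bullet> x)" and Sb2: "\<And>x. - \<beta> * (x \<bullet> x) \<le> x \<bullet> (S *v x)"
    for Sig S :: "real^'n^'n" and b m :: "real^'n"
    by (rule step_bound[OF beta_pos eta sS Sb1 Sb2 loew_lower(1)[OF L] loew_lower(2)[OF L]])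
  have det_case: "\<forall>k. loewner_le ((1 / \<beta>) *\<^sub>R mat 1) (snd (fbgvi gradV H \<eta> m0 Sig0 k))"
  proof
    fix k show "loewner_le ((1 / \<beta>) *\<^sub>R mat 1) (snd (fbgvi gradV H \<eta> m0 Sig0 k))"
    proof (induction k)
      case 0 then show ?case using Sig0_ge by simp
    next
      case (Suc k)
      obtain m Sig where eq: "fbgvi gradV H \<eta> m0 Sig0 k = (m, Sig)" by (cases "fbgvi gradV H \<eta> m0 Sig0 k")
      have L: "loewner_le ((1 / \<beta>) *\<^sub>R mat 1) Sig" using Suc.IH eq by simp
      have symSig: "transpose Sig = Sig" by (rule loew_lower(1)[OF L])
      have posSig: "0 < x \<bullet> (Sig *v x)" if "x \<noteq> 0" for x
      proof -
        have "0 < (x \<bullet> x) / \<beta>" using that beta_pos by simp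
        also have "\<dots> \<le> x \<bullet> (Sig *v x)" by (rule loew_lower(2)[OF L])
        finally show ?thesis .
      qed
      note gd = gauss_density_props[OF symSig posSig, of m]
      note eb = expect_bounds[OF gd(1) gd(2) Hs Hub Hlb b0]
      have "loewner_le ((1 / \<beta>) *\<^sub>R mat 1)
          (snd (gvi_step \<eta> (gauss_expect m Sig gradV) (gauss_expect m Sig H) m Sig))"
        by (rule step[OF L]) (use eb in \<open>simp_all add: gauss_expect_def\<close>)
      thus ?case by (simp add: eq)
    qed
  qed
  have sto_case: "\<forall>X k. loewner_le ((1 / \<beta>) *\<^sub>R mat 1) (snd (sfbgvi gradV H \<eta> m0 Sig0 X k))"
  proof (intro allI)
    fix X k show "loewner_le ((1 / \<beta>) *\<^sub>R mat 1) (snd (sfbgvi gradV H \<eta> m0 Sig0 X k))"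
    proof (induction k)
      case 0 then show ?case using Sig0_ge by simp
    next
      case (Suc k)
      obtain m Sig where eq: "sfbgvi gradV H \<eta> m0 Sig0 X k = (m, Sig)" by (cases "sfbgvi gradV H \<eta> m0 Sig0 X k")
      have L: "loewner_le ((1 / \<beta>) *\<^sub>R mat 1) Sig" using Suc.IH eq by simp
      have "loewner_le ((1 / \<beta>) *\<^sub>R mat 1) (snd (gvi_step \<eta> (gradV (X k)) (H (X k)) m Sig))"
        by (rule step[OF L Hs Hub Hlb])
      thus ?case by (simp add: eq)
    qed
  qed
  show ?thesis using det_case sto_case by blast
qed

end
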